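(* Let $a<b$, $\alpha>0$, $m=\frac{a+b}{2}$. Let $h:[a,b]\to\mathbb{R}$ be strictly increasing and continuously differentiable. Let $f$ be differentiable on an open interval $I\supseteq[h(a),h(b)]$ with $f'$ integrable on $[h(a),h(b)]$ and $|f'|$ convex on $[h(a),h(b)]$, and let $g:[a,b]\to\mathbb{R}$ be continuous. Put $D=h(b)-h(a)$, $U=h(m)-h(a)$, $V=h(b)-h(m)$. Then $$\Big|f(h(m))\Big[(J^{\alpha}_{m^-,h}g)(a)+(J^{\alpha}_{m^+,h}g)(b)\Big]-\Big[(J^{\alpha}_{m^-,h}(g\cdot(f\circ h)))(a)+(J^{\alpha}_{m^+,h}(g\cdot(f\circ h)))(b)\Big]\Big|$$ $$\le \frac{\|g\|_{\infty,[a,m]}}{D\,\Gamma(\alpha+1)}\Big\{|f'(h(a))|\Big[\frac{D\,U^{\alpha+1}}{\alpha+1}-\frac{U^{\alpha+2}}{\alpha+2}\Big]+|f'(h(b))|\frac{U^{\alpha+2}}{\alpha+2}\Big\}$$ $$+\frac{\|g\|_{\infty,[m,b]}}{D\,\Gamma(\alpha+1)}\Big\{|f'(h(b))|\Big[\frac{D\,V^{\alpha+1}}{\alpha+1}-\frac{V^{\alpha+2}}{\alpha+2}\Big]+|f'(h(a))|\frac{V^{\alpha+2}}{\alpha+2}\Big\}.$$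
   Context: Generalized fractional integrals with respect to $h$: for $c<d$ in $[a,b]$ and integrable $\varphi$, $(J^{\alpha}_{c^+,h}\varphi)(x)=\frac{1}{\Gamma(\alpha)}\int_c^x (h(x)-h(t))^{\alpha-1}h'(t)\varphi(t)\,dt$ for $x\in(c,d]$, and $(J^{\alpha}_{d^-,h}\varphi)(x)=\frac{1}{\Gamma(\alpha)}\int_x^d (h(t)-h(x))^{\alpha-1}h'(t)\varphi(t)\,dt$ for $x\in[c,d)$. Thus $(J^{\alpha}_{m^-,h}\varphi)(a)=\frac{1}{\Gamma(\alpha)}\int_a^m (h(t)-h(a))^{\alpha-1}h'(t)\varphi(t)\,dt$ and $(J^{\alpha}_{m^+,h}\varphi)(b)=\frac{1}{\Gamma(\alpha)}\int_m^b (h(b)-h(t))^{\alpha-1}h'(t)\varphi(t)\,dt$. $g\cdot(f\circ h)$ denotes $t\mapsto g(t)f(h(t))$. For a subinterval $J\subseteq[a,b]$, $\|g\|_{\infty,J}=\sup_{t\in J}|g(t)|$. *)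

theory Defs
  imports "HOL-Analysis.Analysis"
begin

text \<open>Generalized fractional integrals with respect to h (h' is the derivative of h).\<close>

definition frac_left :: "real \<Rightarrow> (real \<Rightarrow> real) \<Rightarrow> (real \<Rightarrow> real) \<Rightarrow> real \<Rightarrow> (real \<Rightarrow> real) \<Rightarrow> real \<Rightarrow> real"
  where "frac_left \<alpha> h h' c \<phi> x =
    (1 / Gamma \<alpha>) * integral {c..x} (\<lambda>t. (h x - h t) powr (\<alpha> - 1) * h' t * \<phi> t)"
  \<comment> \<open>J^alpha_{c+,h} phi at x\<close>

definition frac_right :: "real \<Rightarrow> (real \<Rightarrow> real) \<Rightarrow> (real \<Rightarrow> real) \<Rightarrow> real \<Rightarrow> (real \<Rightarrow> real) \<Rightarrow> real \<Rightarrow> real"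
  where "frac_right \<alpha> h h' d \<phi> x =
    (1 / Gamma \<alpha>) * integral {x..d} (\<lambda>t. (h t - h x) powr (\<alpha> - 1) * h' t * \<phi> t)"
  \<comment> \<open>J^alpha_{d-,h} phi at x\<close>

definition sup_norm_on :: "(real \<Rightarrow> real) \<Rightarrow> real set \<Rightarrow> real"
  where "sup_norm_on g J = Sup ((\<lambda>t. \<bar>g t\<bar>) ` J)"

end

theory Submission
  imports Defs
begin

definition PP :: "real \<Rightarrow> real \<Rightarrow> real \<Rightarrow> real \<Rightarrow> real" where
 "PP A B D w = (A*(D*w - w^2/2) + B*w^2/2)/D"
definition QQ :: "real \<Rightarrow> real \<Rightarrow> real \<Rightarrow> real \<Rightarrow> real \<Rightarrow> real" where
 "QQ A B D \<alpha> w = (A*(D*w powr (\<alpha>+1)/(\<alpha>+1) - w powr (\<alpha>+2)/(\<alpha>+2)) + B*(w powr (\<alpha>+2)/(\<alpha>+2)))/(\<alpha>*D)"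
definition GG :: "real \<Rightarrow> real \<Rightarrow> real \<Rightarrow> real \<Rightarrow> real \<Rightarrow> real \<Rightarrow> real" where
 "GG A B D \<alpha> U w = w powr \<alpha> / \<alpha> * (PP A B D U - PP A B D w) + QQ A B D \<alpha> w"

lemma PP_deriv: assumes "D > 0"
  shows "(PP A B D has_real_derivative (A*(D - w) + B*w)/D) (at w)"
  unfolding PP_def using assms
  by (auto intro!: derivative_eq_intros simp: field_simps power2_eq_square)

lemma QQ_deriv: assumes "w > 0" "\<alpha> > 0" "D > 0"
  shows "(QQ A B D \<alpha> has_real_derivative (A*(D*w powr \<alpha> - w powr (\<alpha>+1)) + B*w powr (\<alpha>+1))/(\<alpha>*D)) (at w)"
proof -
  have d1: "((\<lambda>w. w powr (\<alpha>+1)) has_real_derivative (\<alpha>+1) * w powr \<alpha>) (at w)"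
    using has_real_derivative_powr[OF assms(1), of "\<alpha>+1"] by simp
  have d2: "((\<lambda>w. w powr (\<alpha>+2)) has_real_derivative (\<alpha>+2) * w powr (\<alpha>+1)) (at w)"
    using has_real_derivative_powr[OF assms(1), of "\<alpha>+2"] by (simp add: add.commute)
  have "((\<lambda>w. (A*(D*w powr (\<alpha>+1)/(\<alpha>+1) - w powr (\<alpha>+2)/(\<alpha>+2)) + B*(w powr (\<alpha>+2)/(\<alpha>+2)))/(\<alpha>*D))
     has_real_derivative (A*(D*((\<alpha>+1) * w powr \<alpha>)/(\<alpha>+1) - ((\<alpha>+2) * w powr (\<alpha>+1))/(\<alpha>+2)) + B*(((\<alpha>+2) * w powr (\<alpha>+1))/(\<alpha>+2)))/(\<alpha>*D)) (at w)"
    by (intro DERIV_add DERIV_cmult DERIV_diff DERIV_cdivide d1 d2) 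
  then show ?thesis unfolding QQ_def using assms by simp
qed

lemma GG_deriv:
  assumes "w > 0" "\<alpha> > 0" "D > 0"
  shows "(GG A B D \<alpha> U has_real_derivative w powr (\<alpha>-1) * (PP A B D U - PP A B D w)) (at w)"
proof -
  have d0: "((\<lambda>w. w powr \<alpha> / \<alpha>) has_real_derivative (\<alpha> * w powr (\<alpha>-1)) / \<alpha>) (at w)"
    by (intro DERIV_cdivide has_real_derivative_powr assms(1))
  have d: "(GG A B D \<alpha> U has_real_derivative
     w powr \<alpha> / \<alpha> * (0 - (A*(D - w) + B*w)/D) + (\<alpha> * w powr (\<alpha>-1)) / \<alpha> * (PP A B D U - PP A B D w)
      + (A*(D*w powr \<alpha> - w powr (\<alpha>+1)) + B*w powr (\<alpha>+1))/(\<alpha>*D)) (at w)"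
    unfolding GG_def
    by (intro DERIV_add DERIV_mult' d0 DERIV_diff DERIV_const PP_deriv QQ_deriv assms)
  moreover have pw: "w powr (\<alpha>+1) = w powr \<alpha> * w" using assms by (simp add: powr_add)
  have e: "w powr \<alpha> / \<alpha> * (0 - (A*(D - w) + B*w)/D) + (\<alpha> * w powr (\<alpha>-1)) / \<alpha> * (PP A B D U - PP A B D w)
      + (A*(D*w powr \<alpha> - w powr (\<alpha>+1)) + B*w powr (\<alpha>+1))/(\<alpha>*D) = w powr (\<alpha>-1) * (PP A B D U - PP A B D w)"
    unfolding pw using assms by (simp add: field_simps)
  show ?thesis using d unfolding e .
qed
lemma GG_cont: assumes "\<alpha> > 0" "D > 0" shows "continuous_on {0..} (GG A B D \<alpha> U)"
proof -
  have cp: "continuous_on {0..} (\<lambda>w::real. w powr c)" if "c > 0" for c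
    by (rule continuous_on_powr'[OF continuous_on_id continuous_on_const]) (use that in auto)
  have c1: "continuous_on {0..} (\<lambda>w::real. w powr \<alpha>)" using cp assms(1) by simp
  have c2: "continuous_on {0..} (\<lambda>w::real. w powr (\<alpha>+1))" using cp assms(1) by simp
  have c3: "continuous_on {0..} (\<lambda>w::real. w powr (\<alpha>+2))" using cp assms(1) by simp
  show ?thesis unfolding GG_def QQ_def PP_def
    by (intro continuous_on_add continuous_on_mult continuous_on_diff continuous_on_divide
       continuous_on_const continuous_on_power continuous_on_id c1 c2 c3) (use assms in auto)
qed

lemma GG0: "GG A B D \<alpha> U 0 = 0"
  by (simp add: GG_def QQ_def PP_def)

lemma GGU: "GG A B D \<alpha> U U = QQ A B D \<alpha> U"
  by (simp add: GG_def)

lemma cmul_int: "f integrable_on S \<Longrightarrow> (\<lambda>x. (c::real) * f x) integrable_on S"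
  for f :: "real \<Rightarrow> real"
  using integrable_on_cmult_left[of f S c] by simp

lemma int_from_cont:
  fixes F Kb :: "real \<Rightarrow> real"
  assumes "continuous_on S F" "S \<subseteq> {c..d}" "{c..d} - S \<subseteq> {c,d}" "S \<in> sets lebesgue"
    "Kb integrable_on {c..d}" "\<And>t. t\<in>S \<Longrightarrow> \<bar>F t\<bar> \<le> Kb t"
  shows "F integrable_on {c..d}"
proof -
  have neg: "negligible ({c..d} - S)"
    by (rule negligible_subset[OF _ assms(3)]) auto
  have sub: "S - {c..d} = {}" using assms(2) by auto
  have n1: "negligible {x \<in> {c..d} - S. Kb x \<noteq> 0}"
    by (rule negligible_subset[OF neg]) blast
  have n2: "negligible {x \<in> S - {c..d}. Kb x \<noteq> 0}" unfolding sub by simp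
  have KS: "Kb integrable_on S"
    by (rule integrable_spike_set[OF assms(5) n1 n2])
  have "F integrable_on S"
    by (rule measurable_bounded_by_integrable_imp_integrable_real[OF
       continuous_imp_measurable_on_sets_lebesgue[OF assms(1) assms(4)] KS assms(6) assms(4)])
  moreover have "negligible {x \<in> S - {c..d}. F x \<noteq> 0}" unfolding sub by simp
  moreover have "negligible {x \<in> {c..d} - S. F x \<noteq> 0}"
    by (rule negligible_subset[OF neg]) blast
  ultimately show ?thesis
    by (rule integrable_spike_set)
qed

lemma left_side:
  fixes a m \<alpha> M A B D :: real and h h' f g :: "real \<Rightarrow> real"
  assumes am: "a < m" and \<alpha>: "\<alpha> > 0" and D: "D > 0"
    and hc: "continuous_on {a..m} h"
    and hd: "\<And>t. t \<in> {a<..<m} \<Longrightarrow> (h has_real_derivative h' t) (at t)"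
    and h'c: "continuous_on {a..m} h'" and h'0: "\<And>t. t \<in> {a<..m} \<Longrightarrow> h' t \<ge> 0"
    and hpos: "\<And>t. t \<in> {a<..m} \<Longrightarrow> h t > h a"
    and gc: "continuous_on {a..m} g" and gM: "\<And>t. t \<in> {a..m} \<Longrightarrow> \<bar>g t\<bar> \<le> M"
    and fc: "continuous_on {a..m} (\<lambda>t. f (h t))"
    and fb: "\<And>t. t \<in> {a..m} \<Longrightarrow> \<bar>f (h m) - f (h t)\<bar> \<le> PP A B D (h m - h a) - PP A B D (h t - h a)"
  shows "\<bar>f (h m) * frac_right \<alpha> h h' m g a - frac_right \<alpha> h h' m (\<lambda>t. g t * f (h t)) a\<bar>
     \<le> M * QQ A B D \<alpha> (h m - h a) / Gamma \<alpha>"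
proof -
  define U where "U = h m - h a"
  define K where "K t = (h t - h a) powr (\<alpha> - 1) * h' t" for t
  define \<psi> where "\<psi> t = PP A B D U - PP A B D (h t - h a)" for t
  have hge: "h t - h a \<ge> 0" if "t \<in> {a..m}" for t
    using hpos[of t] that by (cases "t = a") auto
  have Kge: "K t \<ge> 0" if "t \<in> {a..m}" for t
    using h'0[of t] that unfolding K_def by (cases "t = a") auto
  have psige: "\<psi> t \<ge> 0" if "t \<in> {a..m}" for t
    using fb[OF that] unfolding \<psi>_def U_def by linarith
  have "((\<lambda>t. K t * \<psi> t) has_integral (GG A B D \<alpha> U (h m - h a) - GG A B D \<alpha> U (h a - h a))) {a..m}"
  proof (rule fundamental_theorem_of_calculus_interior)
    show "a \<le> m" using am by simp
    show "continuous_on {a..m} (\<lambda>t. GG A B D \<alpha> U (h t - h a))"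
      by (rule continuous_on_compose2[OF GG_cont[OF \<alpha> D]]) (use hge hc in \<open>auto intro!: continuous_intros\<close>)
    fix t assume t: "t \<in> {a<..<m}"
    have "((\<lambda>t. GG A B D \<alpha> U (h t - h a)) has_real_derivative
        (h t - h a) powr (\<alpha>-1) * (PP A B D U - PP A B D (h t - h a)) * (h' t - 0)) (at t)"
      by (rule DERIV_chain2[OF GG_deriv]) (use t hpos \<alpha> D hd in \<open>auto intro!: derivative_eq_intros\<close>)
    then show "((\<lambda>t. GG A B D \<alpha> U (h t - h a)) has_vector_derivative K t * \<psi> t) (at t)"
      unfolding has_real_derivative_iff_has_vector_derivative[symmetric] K_def \<psi>_def
      by (simp add: ac_simps)
  qed
  then have Kpsi: "((\<lambda>t. K t * \<psi> t) has_integral QQ A B D \<alpha> U) {a..m}"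
    by (simp add: GG0 GGU U_def)
  have "(K has_integral ((h m - h a) powr \<alpha> / \<alpha> - (h a - h a) powr \<alpha> / \<alpha>)) {a..m}"
  proof (rule fundamental_theorem_of_calculus_interior)
    show "a \<le> m" using am by simp
    show "continuous_on {a..m} (\<lambda>t. (h t - h a) powr \<alpha> / \<alpha>)"
      using hge hc \<alpha> by (intro continuous_intros continuous_on_powr') auto
    fix t assume t: "t \<in> {a<..<m}"
    have "((\<lambda>t. (h t - h a) powr \<alpha> / \<alpha>) has_real_derivative K t) (at t)"
      using t hpos[of t] \<alpha> hd[OF t] unfolding K_def
      by (auto intro!: derivative_eq_intros)
    then show "((\<lambda>t. (h t - h a) powr \<alpha> / \<alpha>) has_vector_derivative K t) (at t)"
      by (simp add: has_real_derivative_iff_has_vector_derivative)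
  qed
  then have Kint: "K integrable_on {a..m}" by blast
  have hne: "h t - h a \<noteq> 0" if "t \<in> {a<..m}" for t using hpos[OF that] by simp
  have cont_open: "continuous_on {a<..m} (\<lambda>t. K t * c t)" if "continuous_on {a..m} c" for c
  proof -
    have c1: "continuous_on {a<..m} h" by (rule continuous_on_subset[OF hc]) auto
    have c2: "continuous_on {a<..m} h'" by (rule continuous_on_subset[OF h'c]) auto
    have c3: "continuous_on {a<..m} c" by (rule continuous_on_subset[OF that]) auto
    have cp: "continuous_on {a<..m} (\<lambda>t. (h t - h a) powr (\<alpha> - 1))"
      by (rule continuous_on_powr'[OF continuous_on_diff[OF c1 continuous_on_const] continuous_on_const])
         (use hpos in force)
    show ?thesis unfolding K_def by (intro continuous_on_mult cp c2 c3)
  qed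
  have S1: "{a<..m} \<subseteq> {a..m}" "{a..m} - {a<..m} \<subseteq> {a,m}" "{a<..m} \<in> sets lebesgue"
    by auto
  have F1: "(\<lambda>t. K t * g t) integrable_on {a..m}"
  proof (rule int_from_cont[where Kb = "\<lambda>t. M * K t", OF cont_open[OF gc] S1])
    show "(\<lambda>t. M * K t) integrable_on {a..m}"
      by (rule cmul_int[OF Kint])
    fix t assume t: "t \<in> {a<..m}"
    then have t': "t \<in> {a..m}" by auto
    show "\<bar>K t * g t\<bar> \<le> M * K t"
      using mult_left_mono[OF gM[OF t'] Kge[OF t']] Kge[OF t'] by (simp add: abs_mult mult.commute)
  qed
  have bnd: "\<bar>K t * (g t * (f (h m) - f (h t)))\<bar> \<le> M * (K t * \<psi> t)" if t': "t \<in> {a..m}" for t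
  proof -
    have fbt: "\<bar>f (h m) - f (h t)\<bar> \<le> \<psi> t" using fb[OF t'] unfolding \<psi>_def U_def .
    have M0: "0 \<le> M" using gM[OF t'] abs_ge_zero[of "g t"] by linarith
    have "\<bar>g t\<bar> * \<bar>f (h m) - f (h t)\<bar> \<le> M * \<psi> t"
      by (rule mult_mono[OF gM[OF t'] fbt M0 abs_ge_zero])
    then have "K t * (\<bar>g t\<bar> * \<bar>f (h m) - f (h t)\<bar>) \<le> K t * (M * \<psi> t)"
      by (rule mult_left_mono[OF _ Kge[OF t']])
    moreover have "\<bar>K t * (g t * (f (h m) - f (h t)))\<bar> = K t * (\<bar>g t\<bar> * \<bar>f (h m) - f (h t)\<bar>)"
      using Kge[OF t'] by (simp add: abs_mult)
    ultimately show ?thesis by (simp add: ac_simps)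
  qed
  have cE: "continuous_on {a..m} (\<lambda>t. g t * (f (h m) - f (h t)))"
    by (rule continuous_on_mult[OF gc continuous_on_diff[OF continuous_on_const fc]])
  have E: "(\<lambda>t. K t * (g t * (f (h m) - f (h t)))) integrable_on {a..m}"
  proof (rule int_from_cont[where Kb = "\<lambda>t. M * (K t * \<psi> t)", OF cont_open[OF cE] S1])
    show "(\<lambda>t. M * (K t * \<psi> t)) integrable_on {a..m}"
      by (rule cmul_int[OF has_integral_integrable[OF Kpsi]])
    fix t assume t: "t \<in> {a<..m}"
    then show "\<bar>K t * (g t * (f (h m) - f (h t)))\<bar> \<le> M * (K t * \<psi> t)" using bnd by auto
  qed
  have F2: "(\<lambda>t. K t * (g t * f (h t))) integrable_on {a..m}"
  proof -
    have "(\<lambda>t. f (h m) * (K t * g t) - K t * (g t * (f (h m) - f (h t)))) integrable_on {a..m}"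
      by (rule integrable_diff[OF cmul_int[OF F1] E])
    then show ?thesis by (simp add: algebra_simps)
  qed
  have eq: "f (h m) * frac_right \<alpha> h h' m g a - frac_right \<alpha> h h' m (\<lambda>t. g t * f (h t)) a
     = (1 / Gamma \<alpha>) * integral {a..m} (\<lambda>t. K t * (g t * (f (h m) - f (h t))))"
  proof -
    have "integral {a..m} (\<lambda>t. K t * (g t * (f (h m) - f (h t))))
       = integral {a..m} (\<lambda>t. f (h m) * (K t * g t) - K t * (g t * f (h t)))"
      by (simp add: algebra_simps)
    also have "\<dots> = f (h m) * integral {a..m} (\<lambda>t. K t * g t) - integral {a..m} (\<lambda>t. K t * (g t * f (h t)))"
      by (subst integral_diff[OF cmul_int[OF F1] F2]) (simp only: integral_mult[OF F1])
    finally have X: "integral {a..m} (\<lambda>t. K t * (g t * (f (h m) - f (h t)))) =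
      f (h m) * integral {a..m} (\<lambda>t. K t * g t) - integral {a..m} (\<lambda>t. K t * (g t * f (h t)))" .
    have lem: "\<And>c G y z::real. c*(1/G*y) - 1/G*z = 1/G*(c*y - z)" by (simp add: algebra_simps)
    show ?thesis unfolding X unfolding frac_right_def K_def by (rule lem)
  qed
  have "norm (integral {a..m} (\<lambda>t. K t * (g t * (f (h m) - f (h t))))) \<le> integral {a..m} (\<lambda>t. M * (K t * \<psi> t))"
  proof (rule integral_norm_bound_integral[OF E])
    show "(\<lambda>t. M * (K t * \<psi> t)) integrable_on {a..m}"
      by (rule cmul_int[OF has_integral_integrable[OF Kpsi]])
    fix t assume t': "t \<in> {a..m}"
    show "norm (K t * (g t * (f (h m) - f (h t)))) \<le> M * (K t * \<psi> t)" using bnd[OF t'] by simp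
  qed
  then have "\<bar>integral {a..m} (\<lambda>t. K t * (g t * (f (h m) - f (h t))))\<bar> \<le> integral {a..m} (\<lambda>t. M * (K t * \<psi> t))"
    by simp
  also have "\<dots> = M * QQ A B D \<alpha> U" by (rule integral_unique) (rule has_integral_mult_right[OF Kpsi])
  finally have bnd: "\<bar>integral {a..m} (\<lambda>t. K t * (g t * (f (h m) - f (h t))))\<bar> \<le> M * QQ A B D \<alpha> U" .
  have G: "Gamma \<alpha> > 0" using \<alpha> by simp
  show ?thesis unfolding eq using bnd G
    by (simp add: abs_mult divide_right_mono U_def)
qed


lemma right_side:
  fixes a m \<alpha> M A B D :: real and h h' f g :: "real \<Rightarrow> real"
  assumes am: "m < b" and \<alpha>: "\<alpha> > 0" and D: "D > 0"
    and hc: "continuous_on {m..b} h"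
    and hd: "\<And>t. t \<in> {m<..<b} \<Longrightarrow> (h has_real_derivative h' t) (at t)"
    and h'c: "continuous_on {m..b} h'" and h'0: "\<And>t. t \<in> {m..<b} \<Longrightarrow> h' t \<ge> 0"
    and hpos: "\<And>t. t \<in> {m..<b} \<Longrightarrow> h t < h b"
    and gc: "continuous_on {m..b} g" and gM: "\<And>t. t \<in> {m..b} \<Longrightarrow> \<bar>g t\<bar> \<le> M"
    and fc: "continuous_on {m..b} (\<lambda>t. f (h t))"
    and fb: "\<And>t. t \<in> {m..b} \<Longrightarrow> \<bar>f (h m) - f (h t)\<bar> \<le> PP A B D (h b - h m) - PP A B D (h b - h t)"
  shows "\<bar>f (h m) * frac_left \<alpha> h h' m g b - frac_left \<alpha> h h' m (\<lambda>t. g t * f (h t)) b\<bar>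
     \<le> M * QQ A B D \<alpha> (h b - h m) / Gamma \<alpha>"
proof -
  define U where "U = h b - h m"
  define K where "K t = (h b - h t) powr (\<alpha> - 1) * h' t" for t
  define \<psi> where "\<psi> t = PP A B D U - PP A B D (h b - h t)" for t
  have hge: "h b - h t \<ge> 0" if "t \<in> {m..b}" for t
    using hpos[of t] that by (cases "t = b") auto
  have Kge: "K t \<ge> 0" if "t \<in> {m..b}" for t
    using h'0[of t] that unfolding K_def by (cases "t = b") auto
  have psige: "\<psi> t \<ge> 0" if "t \<in> {m..b}" for t
    using fb[OF that] unfolding \<psi>_def U_def by linarith
  have "((\<lambda>t. K t * \<psi> t) has_integral ((- GG A B D \<alpha> U (h b - h b)) - (- GG A B D \<alpha> U (h b - h m)))) {m..b}"
  proof (rule fundamental_theorem_of_calculus_interior)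
    show "m \<le> b" using am by simp
    show "continuous_on {m..b} (\<lambda>t. - GG A B D \<alpha> U (h b - h t))"
      by (intro continuous_on_minus, rule continuous_on_compose2[OF GG_cont[OF \<alpha> D]])
        (use hge hc in \<open>auto intro!: continuous_intros\<close>)
    fix t assume t: "t \<in> {m<..<b}"
    have "((\<lambda>t. GG A B D \<alpha> U (h b - h t)) has_real_derivative
        (h b - h t) powr (\<alpha>-1) * (PP A B D U - PP A B D (h b - h t)) * (0 - h' t)) (at t)"
      by (rule DERIV_chain2[OF GG_deriv]) (use t hpos \<alpha> D hd in \<open>auto intro!: derivative_eq_intros\<close>)
    then have "((\<lambda>t. - GG A B D \<alpha> U (h b - h t)) has_real_derivative
        - ((h b - h t) powr (\<alpha>-1) * (PP A B D U - PP A B D (h b - h t)) * (0 - h' t))) (at t)"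
      by (rule DERIV_minus)
    then show "((\<lambda>t. - GG A B D \<alpha> U (h b - h t)) has_vector_derivative K t * \<psi> t) (at t)"
      unfolding has_real_derivative_iff_has_vector_derivative[symmetric] K_def \<psi>_def
      by (simp add: ac_simps)
  qed
  then have Kpsi: "((\<lambda>t. K t * \<psi> t) has_integral QQ A B D \<alpha> U) {m..b}"
    by (simp add: GG0 GGU U_def)
  have "(K has_integral ((- ((h b - h b) powr \<alpha> / \<alpha>)) - (- ((h b - h m) powr \<alpha> / \<alpha>)))) {m..b}"
  proof (rule fundamental_theorem_of_calculus_interior)
    show "m \<le> b" using am by simp
    show "continuous_on {m..b} (\<lambda>t. - ((h b - h t) powr \<alpha> / \<alpha>))"
      using hge hc \<alpha> by (intro continuous_intros continuous_on_powr') auto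
    fix t assume t: "t \<in> {m<..<b}"
    have "((\<lambda>t. - ((h b - h t) powr \<alpha> / \<alpha>)) has_real_derivative K t) (at t)"
      using t hpos[of t] \<alpha> hd[OF t] unfolding K_def
      by (auto intro!: derivative_eq_intros)
    then show "((\<lambda>t. - ((h b - h t) powr \<alpha> / \<alpha>)) has_vector_derivative K t) (at t)"
      by (simp add: has_real_derivative_iff_has_vector_derivative)
  qed
  then have Kint: "K integrable_on {m..b}" by blast
  have hne: "h b - h t \<noteq> 0" if "t \<in> {m..<b}" for t using hpos[OF that] by simp
  have cont_open: "continuous_on {m..<b} (\<lambda>t. K t * c t)" if "continuous_on {m..b} c" for c
  proof -
    have c1: "continuous_on {m..<b} h" by (rule continuous_on_subset[OF hc]) auto
    have c2: "continuous_on {m..<b} h'" by (rule continuous_on_subset[OF h'c]) auto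
    have c3: "continuous_on {m..<b} c" by (rule continuous_on_subset[OF that]) auto
    have cp: "continuous_on {m..<b} (\<lambda>t. (h b - h t) powr (\<alpha> - 1))"
      by (rule continuous_on_powr'[OF continuous_on_diff[OF continuous_on_const c1] continuous_on_const])
         (use hpos in force)
    show ?thesis unfolding K_def by (intro continuous_on_mult cp c2 c3)
  qed
  have S1: "{m..<b} \<subseteq> {m..b}" "{m..b} - {m..<b} \<subseteq> {m,b}" "{m..<b} \<in> sets lebesgue"
    by auto
  have F1: "(\<lambda>t. K t * g t) integrable_on {m..b}"
  proof (rule int_from_cont[where Kb = "\<lambda>t. M * K t", OF cont_open[OF gc] S1])
    show "(\<lambda>t. M * K t) integrable_on {m..b}"
      by (rule cmul_int[OF Kint])
    fix t assume t: "t \<in> {m..<b}"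
    then have t': "t \<in> {m..b}" by auto
    show "\<bar>K t * g t\<bar> \<le> M * K t"
      using mult_left_mono[OF gM[OF t'] Kge[OF t']] Kge[OF t'] by (simp add: abs_mult mult.commute)
  qed
  have bnd: "\<bar>K t * (g t * (f (h m) - f (h t)))\<bar> \<le> M * (K t * \<psi> t)" if t': "t \<in> {m..b}" for t
  proof -
    have fbt: "\<bar>f (h m) - f (h t)\<bar> \<le> \<psi> t" using fb[OF t'] unfolding \<psi>_def U_def .
    have M0: "0 \<le> M" using gM[OF t'] abs_ge_zero[of "g t"] by linarith
    have "\<bar>g t\<bar> * \<bar>f (h m) - f (h t)\<bar> \<le> M * \<psi> t"
      by (rule mult_mono[OF gM[OF t'] fbt M0 abs_ge_zero])
    then have "K t * (\<bar>g t\<bar> * \<bar>f (h m) - f (h t)\<bar>) \<le> K t * (M * \<psi> t)"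
      by (rule mult_left_mono[OF _ Kge[OF t']])
    moreover have "\<bar>K t * (g t * (f (h m) - f (h t)))\<bar> = K t * (\<bar>g t\<bar> * \<bar>f (h m) - f (h t)\<bar>)"
      using Kge[OF t'] by (simp add: abs_mult)
    ultimately show ?thesis by (simp add: ac_simps)
  qed
  have cE: "continuous_on {m..b} (\<lambda>t. g t * (f (h m) - f (h t)))"
    by (rule continuous_on_mult[OF gc continuous_on_diff[OF continuous_on_const fc]])
  have E: "(\<lambda>t. K t * (g t * (f (h m) - f (h t)))) integrable_on {m..b}"
  proof (rule int_from_cont[where Kb = "\<lambda>t. M * (K t * \<psi> t)", OF cont_open[OF cE] S1])
    show "(\<lambda>t. M * (K t * \<psi> t)) integrable_on {m..b}"
      by (rule cmul_int[OF has_integral_integrable[OF Kpsi]])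
    fix t assume t: "t \<in> {m..<b}"
    then show "\<bar>K t * (g t * (f (h m) - f (h t)))\<bar> \<le> M * (K t * \<psi> t)" using bnd by auto
  qed
  have F2: "(\<lambda>t. K t * (g t * f (h t))) integrable_on {m..b}"
  proof -
    have "(\<lambda>t. f (h m) * (K t * g t) - K t * (g t * (f (h m) - f (h t)))) integrable_on {m..b}"
      by (rule integrable_diff[OF cmul_int[OF F1] E])
    then show ?thesis by (simp add: algebra_simps)
  qed
  have eq: "f (h m) * frac_left \<alpha> h h' m g b - frac_left \<alpha> h h' m (\<lambda>t. g t * f (h t)) b
     = (1 / Gamma \<alpha>) * integral {m..b} (\<lambda>t. K t * (g t * (f (h m) - f (h t))))"
  proof -
    have "integral {m..b} (\<lambda>t. K t * (g t * (f (h m) - f (h t))))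
       = integral {m..b} (\<lambda>t. f (h m) * (K t * g t) - K t * (g t * f (h t)))"
      by (simp add: algebra_simps)
    also have "\<dots> = f (h m) * integral {m..b} (\<lambda>t. K t * g t) - integral {m..b} (\<lambda>t. K t * (g t * f (h t)))"
      by (subst integral_diff[OF cmul_int[OF F1] F2]) (simp only: integral_mult[OF F1])
    finally have X: "integral {m..b} (\<lambda>t. K t * (g t * (f (h m) - f (h t)))) =
      f (h m) * integral {m..b} (\<lambda>t. K t * g t) - integral {m..b} (\<lambda>t. K t * (g t * f (h t)))" .
    have lem: "\<And>c G y z::real. c*(1/G*y) - 1/G*z = 1/G*(c*y - z)" by (simp add: algebra_simps)
    show ?thesis unfolding X unfolding frac_left_def K_def by (rule lem)
  qed
  have "norm (integral {m..b} (\<lambda>t. K t * (g t * (f (h m) - f (h t))))) \<le> integral {m..b} (\<lambda>t. M * (K t * \<psi> t))"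
  proof (rule integral_norm_bound_integral[OF E])
    show "(\<lambda>t. M * (K t * \<psi> t)) integrable_on {m..b}"
      by (rule cmul_int[OF has_integral_integrable[OF Kpsi]])
    fix t assume t': "t \<in> {m..b}"
    show "norm (K t * (g t * (f (h m) - f (h t)))) \<le> M * (K t * \<psi> t)" using bnd[OF t'] by simp
  qed
  then have "\<bar>integral {m..b} (\<lambda>t. K t * (g t * (f (h m) - f (h t))))\<bar> \<le> integral {m..b} (\<lambda>t. M * (K t * \<psi> t))"
    by simp
  also have "\<dots> = M * QQ A B D \<alpha> U" by (rule integral_unique) (rule has_integral_mult_right[OF Kpsi])
  finally have bnd: "\<bar>integral {m..b} (\<lambda>t. K t * (g t * (f (h m) - f (h t))))\<bar> \<le> M * QQ A B D \<alpha> U" .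
  have G: "Gamma \<alpha> > 0" using \<alpha> by simp
  show ?thesis unfolding eq using bnd G
    by (simp add: abs_mult divide_right_mono U_def)
qed


lemma mono_bound:
  fixes f f' \<Phi> L :: "real \<Rightarrow> real"
  assumes xy: "x \<le> y"
    and fd: "\<And>s. s \<in> {x..y} \<Longrightarrow> (f has_real_derivative f' s) (at s)"
    and pd: "\<And>s. s \<in> {x..y} \<Longrightarrow> (\<Phi> has_real_derivative L s) (at s)"
    and le: "\<And>s. s \<in> {x..y} \<Longrightarrow> \<bar>f' s\<bar> \<le> L s"
  shows "\<bar>f y - f x\<bar> \<le> \<Phi> y - \<Phi> x"
proof -
  have "\<Phi> x - f x \<le> \<Phi> y - f y"
  proof (rule DERIV_nonneg_imp_nondecreasing[OF xy])
    fix s assume "x \<le> s" "s \<le> y"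
    then have s: "s \<in> {x..y}" by auto
    show "\<exists>z. ((\<lambda>s. \<Phi> s - f s) has_real_derivative z) (at s) \<and> z \<ge> 0"
      using DERIV_diff[OF pd[OF s] fd[OF s]] le[OF s] by (intro exI[of _ "L s - f' s"]) auto
  qed
  moreover have "\<Phi> x + f x \<le> \<Phi> y + f y"
  proof (rule DERIV_nonneg_imp_nondecreasing[OF xy])
    fix s assume "x \<le> s" "s \<le> y"
    then have s: "s \<in> {x..y}" by auto
    show "\<exists>z. ((\<lambda>s. \<Phi> s + f s) has_real_derivative z) (at s) \<and> z \<ge> 0"
      using DERIV_add[OF pd[OF s] fd[OF s]] le[OF s] by (intro exI[of _ "L s + f' s"]) auto
  qed
  ultimately show ?thesis by linarith
qed

lemma QQ_eq:
  assumes "\<alpha> > 0" "D > 0"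
  shows "M * QQ A B D \<alpha> W / Gamma \<alpha> = M / (D * Gamma (\<alpha> + 1)) *
    (A * (D * W powr (\<alpha> + 1) / (\<alpha> + 1) - W powr (\<alpha> + 2) / (\<alpha> + 2)) + B * (W powr (\<alpha> + 2) / (\<alpha> + 2)))"
proof -
  have "\<alpha> \<notin> \<int>\<^sub>\<le>\<^sub>0" using assms(1) by (auto elim!: nonpos_Ints_cases)
  then have G: "Gamma (\<alpha> + 1) = \<alpha> * Gamma \<alpha>" by (rule Gamma_plus1)
  have "Gamma \<alpha> > 0" using assms by simp
  then show ?thesis unfolding G QQ_def using assms by (simp add: field_simps)
qed

lemma sup_norm_bound:
  assumes "continuous_on {c..d} g" "t \<in> {c..d}"
  shows "\<bar>g t\<bar> \<le> sup_norm_on g {c..d}"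
proof -
  have "compact ((\<lambda>t. \<bar>g t\<bar>) ` {c..d})"
    by (rule compact_continuous_image) (use assms(1) in \<open>auto intro!: continuous_intros\<close>)
  then have "bdd_above ((\<lambda>t. \<bar>g t\<bar>) ` {c..d})"
    by (intro bounded_imp_bdd_above compact_imp_bounded)
  then show ?thesis unfolding sup_norm_on_def using assms(2) by (intro cSup_upper) auto
qed

theorem theorem2p1:
  fixes a b \<alpha> :: real and h h' f g :: "real \<Rightarrow> real" and I :: "real set"
  assumes ab: "a < b" and alpha: "\<alpha> > 0"
    and h_mono: "strict_mono_on {a..b} h"
    and h_deriv: "\<And>x. x \<in> {a..b} \<Longrightarrow> (h has_real_derivative h' x) (at x within {a..b})"
    and h'_cont: "continuous_on {a..b} h'"
    and I_open: "open I" and I_interval: "is_interval I"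
    and I_sub: "{h a..h b} \<subseteq> I"
    and f_diff: "\<And>x. x \<in> I \<Longrightarrow> f differentiable (at x)"
    and f'_int: "deriv f integrable_on {h a..h b}"
    and f'_convex: "convex_on {h a..h b} (\<lambda>x. \<bar>deriv f x\<bar>)"
    and g_cont: "continuous_on {a..b} g"
  shows "let m = (a + b) / 2; D = h b - h a; U = h m - h a; V = h b - h m in
    \<bar>f (h m) * (frac_right \<alpha> h h' m g a + frac_left \<alpha> h h' m g b)
      - (frac_right \<alpha> h h' m (\<lambda>t. g t * f (h t)) a + frac_left \<alpha> h h' m (\<lambda>t. g t * f (h t)) b)\<bar>
    \<le> sup_norm_on g {a..m} / (D * Gamma (\<alpha> + 1)) *
         (\<bar>deriv f (h a)\<bar> * (D * U powr (\<alpha> + 1) / (\<alpha> + 1) - U powr (\<alpha> + 2) / (\<alpha> + 2))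
          + \<bar>deriv f (h b)\<bar> * (U powr (\<alpha> + 2) / (\<alpha> + 2)))
     + sup_norm_on g {m..b} / (D * Gamma (\<alpha> + 1)) *
         (\<bar>deriv f (h b)\<bar> * (D * V powr (\<alpha> + 1) / (\<alpha> + 1) - V powr (\<alpha> + 2) / (\<alpha> + 2))
          + \<bar>deriv f (h a)\<bar> * (V powr (\<alpha> + 2) / (\<alpha> + 2)))"
proof -
  define m where "m = (a + b) / 2"
  define D where "D = h b - h a"
  define A where "A = \<bar>deriv f (h a)\<bar>"
  define B where "B = \<bar>deriv f (h b)\<bar>"
  have am: "a < m" and mb: "m < b" using ab unfolding m_def by auto
  have D: "D > 0" using strict_mono_onD[OF h_mono, of a b] ab unfolding D_def by auto
  have hle: "h s \<le> h t" if "s \<in> {a..b}" "t \<in> {a..b}" "s \<le> t" for s t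
    using strict_mono_onD[OF h_mono that(1,2)] that(3) by (cases "s = t") auto
  have hlt: "h s < h t" if "s \<in> {a..b}" "t \<in> {a..b}" "s < t" for s t
    using strict_mono_onD[OF h_mono that] .
  have hin: "h t \<in> {h a..h b}" if "t \<in> {a..b}" for t
    using hle[of a t] hle[of t b] that by auto
  have hc: "continuous_on {a..b} h" by (rule DERIV_continuous_on[OF h_deriv])
  have hd: "(h has_real_derivative h' t) (at t)" if "t \<in> {a<..<b}" for t
    using h_deriv[of t] that at_within_Icc_at[of a t b] by auto
  have h'0: "h' t \<ge> 0" if t: "t \<in> {a<..<b}" for t
  proof (rule ccontr)
    assume "\<not> h' t \<ge> 0"
    then obtain d where d: "d > 0" "\<And>e. e > 0 \<Longrightarrow> e < d \<Longrightarrow> h t > h (t + e)"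
      using DERIV_neg_dec_right[OF hd[OF t]] by force
    define e where "e = min (d/2) ((b - t)/2)"
    have e1: "e \<le> (b - t)/2" "e \<le> d/2" unfolding e_def by (rule min.cobounded2, rule min.cobounded1)
    have e0: "e > 0" unfolding e_def using d t by auto
    have tb: "t < b" using t by simp
    have e: "e > 0" "e < d" "t + e \<le> b"
      using e0 apply simp
      using e1(2) d(1) apply linarith
      using e1(1) tb by (simp add: field_simps)
    have "h t < h (t + e)" using hlt[of t "t + e"] e t by auto
    with d(2)[OF e(1,2)] show False by simp
  qed
  have fd: "(f has_real_derivative deriv f s) (at s)" if "s \<in> {h a..h b}" for s
  proof -
    have "s \<in> I" using I_sub that by blast
    then show ?thesis using f_diff DERIV_deriv_iff_real_differentiable by simp
  qed
  have fcI: "continuous_on {h a..h b} f"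
    using fd by (intro continuous_at_imp_continuous_on ballI DERIV_isCont) auto
  have fhc: "continuous_on {c..d} (\<lambda>t. f (h t))" if "{c..d} \<subseteq> {a..b}" for c d
    by (rule continuous_on_compose2[OF fcI continuous_on_subset[OF hc that]]) (use hin that in auto)
  define L where "L s = (A * (h b - s) + B * (s - h a)) / D" for s
  have fL: "\<bar>deriv f s\<bar> \<le> L s" if s: "s \<in> {h a..h b}" for s
  proof -
    define lam where "lam = (s - h a) / D"
    have l: "lam \<ge> 0" "lam \<le> 1" using s D unfolding lam_def D_def by (auto simp: field_simps)
    have ha: "h a \<in> {h a..h b}" and hb: "h b \<in> {h a..h b}" using D unfolding D_def by auto
    have ld: "lam * D = s - h a" using D unfolding lam_def by simp
    have l1: "1 - lam = (h b - s) / D" using D unfolding lam_def D_def by (simp add: field_simps)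
    have "\<bar>deriv f ((1 - lam) *\<^sub>R h a + lam *\<^sub>R h b)\<bar> \<le> (1 - lam) * A + lam * B"
      using convex_onD[OF f'_convex l ha hb] unfolding A_def B_def .
    moreover have "(1 - lam) *\<^sub>R h a + lam *\<^sub>R h b = s"
      using ld unfolding D_def by (simp add: algebra_simps)
    moreover have "(1 - lam) * A + lam * B = L s"
      by (subst l1) (simp add: L_def lam_def add_divide_distrib mult.commute)
    ultimately show ?thesis by simp
  qed
  have hbD: "h b = h a + D" unfolding D_def by simp
  have P1d: "((\<lambda>s. PP A B D (s - h a)) has_real_derivative L s) (at s)" for s
    unfolding PP_def L_def
    using D by (auto intro!: derivative_eq_intros simp: hbD field_simps power2_eq_square)
  have P2d: "((\<lambda>s. - PP B A D (h b - s)) has_real_derivative L s) (at s)" for s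
    unfolding PP_def L_def
    using D by (auto intro!: derivative_eq_intros simp: hbD field_simps power2_eq_square)
  have left: "\<bar>f (h m) * frac_right \<alpha> h h' m g a - frac_right \<alpha> h h' m (\<lambda>t. g t * f (h t)) a\<bar>
     \<le> sup_norm_on g {a..m} * QQ A B D \<alpha> (h m - h a) / Gamma \<alpha>"
  proof (rule left_side[OF am alpha D])
    show "continuous_on {a..m} h" by (rule continuous_on_subset[OF hc]) (use mb in auto)
    show "(h has_real_derivative h' t) (at t)" if "t \<in> {a<..<m}" for t using hd that mb by auto
    show "continuous_on {a..m} h'" by (rule continuous_on_subset[OF h'_cont]) (use mb in auto)
    show "h' t \<ge> 0" if "t \<in> {a<..m}" for t using h'0 that mb by auto
    show "h t > h a" if "t \<in> {a<..m}" for t using hlt[of a t] that mb by auto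
    show "continuous_on {a..m} g" by (rule continuous_on_subset[OF g_cont]) (use mb in auto)
    show "\<bar>g t\<bar> \<le> sup_norm_on g {a..m}" if "t \<in> {a..m}" for t
      by (rule sup_norm_bound[OF continuous_on_subset[OF g_cont] that]) (use mb in auto)
    show "continuous_on {a..m} (\<lambda>t. f (h t))" by (rule fhc) (use mb in auto)
    fix t assume t: "t \<in> {a..m}"
    have t1: "h t \<le> h m" using hle[of t m] t mb by auto
    have "\<bar>f (h m) - f (h t)\<bar> \<le> PP A B D (h m - h a) - PP A B D (h t - h a)"
    proof (rule mono_bound[OF t1, where \<Phi> = "\<lambda>s. PP A B D (s - h a)" and f' = "deriv f" and L = L])
      fix s assume s: "s \<in> {h t..h m}"
      have "s \<in> {h a..h b}" using s hin[of t] hin[of m] t mb am by auto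
      then show "(f has_real_derivative deriv f s) (at s)" "\<bar>deriv f s\<bar> \<le> L s"
        using fd fL by auto
      show "((\<lambda>s. PP A B D (s - h a)) has_real_derivative L s) (at s)" by (rule P1d)
    qed
    then show "\<bar>f (h m) - f (h t)\<bar> \<le> PP A B D (h m - h a) - PP A B D (h t - h a)" .
  qed
  have right: "\<bar>f (h m) * frac_left \<alpha> h h' m g b - frac_left \<alpha> h h' m (\<lambda>t. g t * f (h t)) b\<bar>
     \<le> sup_norm_on g {m..b} * QQ B A D \<alpha> (h b - h m) / Gamma \<alpha>"
  proof (rule right_side[OF mb alpha D])
    show "continuous_on {m..b} h" by (rule continuous_on_subset[OF hc]) (use am in auto)
    show "(h has_real_derivative h' t) (at t)" if "t \<in> {m<..<b}" for t using hd that am by auto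
    show "continuous_on {m..b} h'" by (rule continuous_on_subset[OF h'_cont]) (use am in auto)
    show "h' t \<ge> 0" if "t \<in> {m..<b}" for t using h'0 that am by auto
    show "h t < h b" if "t \<in> {m..<b}" for t using hlt[of t b] that am by auto
    show "continuous_on {m..b} g" by (rule continuous_on_subset[OF g_cont]) (use am in auto)
    show "\<bar>g t\<bar> \<le> sup_norm_on g {m..b}" if "t \<in> {m..b}" for t
      by (rule sup_norm_bound[OF continuous_on_subset[OF g_cont] that]) (use am in auto)
    show "continuous_on {m..b} (\<lambda>t. f (h t))" by (rule fhc) (use am in auto)
    fix t assume t: "t \<in> {m..b}"
    have t1: "h m \<le> h t" using hle[of m t] t am by auto
    have "\<bar>f (h t) - f (h m)\<bar> \<le> (- PP B A D (h b - h t)) - (- PP B A D (h b - h m))"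
    proof (rule mono_bound[OF t1, where \<Phi> = "\<lambda>s. - PP B A D (h b - s)" and f' = "deriv f" and L = L])
      fix s assume s: "s \<in> {h m..h t}"
      have "s \<in> {h a..h b}" using s hin[of t] hin[of m] t mb am by auto
      then show "(f has_real_derivative deriv f s) (at s)" "\<bar>deriv f s\<bar> \<le> L s"
        using fd fL by auto
      show "((\<lambda>s. - PP B A D (h b - s)) has_real_derivative L s) (at s)" by (rule P2d)
    qed
    then show "\<bar>f (h m) - f (h t)\<bar> \<le> PP B A D (h b - h m) - PP B A D (h b - h t)"
      by (simp add: abs_minus_commute)
  qed
  have split: "f (h m) * (frac_right \<alpha> h h' m g a + frac_left \<alpha> h h' m g b)
      - (frac_right \<alpha> h h' m (\<lambda>t. g t * f (h t)) a + frac_left \<alpha> h h' m (\<lambda>t. g t * f (h t)) b)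
    = (f (h m) * frac_right \<alpha> h h' m g a - frac_right \<alpha> h h' m (\<lambda>t. g t * f (h t)) a)
    + (f (h m) * frac_left \<alpha> h h' m g b - frac_left \<alpha> h h' m (\<lambda>t. g t * f (h t)) b)"
    by (simp add: algebra_simps)
  show ?thesis
    unfolding Let_def m_def[symmetric] D_def[symmetric] A_def[symmetric] B_def[symmetric] split
    using abs_triangle_ineq[of "f (h m) * frac_right \<alpha> h h' m g a - frac_right \<alpha> h h' m (\<lambda>t. g t * f (h t)) a"
      "f (h m) * frac_left \<alpha> h h' m g b - frac_left \<alpha> h h' m (\<lambda>t. g t * f (h t)) b"]
      left right QQ_eq[OF alpha D, of "sup_norm_on g {a..m}" A B "h m - h a"]
      QQ_eq[OF alpha D, of "sup_norm_on g {m..b}" B A "h b - h m"]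
    by linarith
qed

end
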